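(* (1) Let $(\mathcal T,(N_A,R_A),(N_B,R_B),\mathbb C,\xi)$ be an object of $\mathrm{RArr}(\mathcal A,\mathcal B)$, i.e. $\mathbb C=(C,\Delta,\varepsilon)$ is a comonad on $\mathcal A$ and $(R_A,\xi)$ is a comonad arrow from $\mathbb C$ to $N_BR_B$ with $\xi:CR_A\to R_AN_BR_B$ invertible. Then $(\mathcal T,(N_A,R_A),(N_B,R_B),\tau)$ is a pre-torsor, where $\tau=(\xi N_AR_AN_B)\circ(C\eta^AR_AN_B)\circ(\xi^{-1}N_B)\circ(R_AN_B\eta^B)$. (2) If $(F,t)$ is a morphism $(\mathcal T,(N_A,R_A),(N_B,R_B),\mathbb C,\xi)\to(\mathcal T',(N'_A,R'_A),(N'_B,R'_B),\mathbb C',\xi')$ in $\mathrm{RArr}(\mathcal A,\mathcal B)$, then $F$ is a morphism between the corresponding pre-torsors of (1).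
   Context: Conventions: $\circ$ vertical composition, juxtaposition horizontal composition; a functor's name denotes its identity transformation. Adjunctions $(N_A:\mathcal A\to\mathcal T,R_A)$, $(N_B:\mathcal B\to\mathcal T,R_B)$ with units $\eta^A,\eta^B$, counits $\epsilon^A,\epsilon^B$; $N_BR_B$ is a comonad on $\mathcal T$ with comultiplication $N_B\eta^BR_B$, counit $\epsilon^B$. A comonad arrow $(R_A,\xi)$ from $\mathbb C$ to $N_BR_B$ means $\xi:CR_A\to R_AN_BR_B$ with $(R_A\epsilon^B)\circ\xi=\varepsilon R_A$ and $(R_AN_B\eta^BR_B)\circ\xi=(\xi N_BR_B)\circ(C\xi)\circ(\Delta R_A)$. Pre-torsor: natural $\tau:R_AN_B\to R_AN_BR_BN_AR_AN_B$ with $(R_AN_BR_B\epsilon^AN_B)\circ\tau=R_AN_B\eta^B$, $(R_A\epsilon^BN_AR_AN_B)\circ\tau=\eta^AR_AN_B$, $(R_AN_BR_BN_A\tau)\circ\tau=(\tau R_BN_AR_AN_B)\circ\tau$. For a functor $F:\mathcal T'\to\mathcal T$ with $R_AF=R'_A$, $R_BF=R'_B$ put $a=(\epsilon^AFN'_A)\circ(N_A\eta'^A)$, $b=(\epsilon^BFN'_B)\circ(N_B\eta'^B)$. A morphism of pre-torsors is such $F$ with $(R_AbR_BaR_Ab)\circ\tau=\tau'\circ(R_Ab)$. A morphism in $\mathrm{RArr}(\mathcal A,\mathcal B)$ is a pair $(F,t)$ with $F$ such a functor and $t:\mathbb C\to\mathbb C'$ a comonad morphism satisfying $(R_AbR'_B)\circ(\xi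 F)=\xi'\circ(tR'_A)$. *)

theory Defs
  imports Main
begin

text \<open>A category is given by a type of objects and a type of arrows (every element of
the object type is an object, every element of the arrow type is an arrow), with domain,
codomain, identities and composition. Composition Comp C g f means g after f and is only
constrained for composable pairs.\<close>

record ('o,'m) cat =
  Dom :: "'m \<Rightarrow> 'o"
  Cod :: "'m \<Rightarrow> 'o"
  Id  :: "'o \<Rightarrow> 'm"
  Comp :: "'m \<Rightarrow> 'm \<Rightarrow> 'm"

definition category :: "('o,'m) cat \<Rightarrow> bool" where
  "category C \<longleftrightarrow>
     (\<forall>x. Dom C (Id C x) = x \<and> Cod C (Id C x) = x) \<and>
     (\<forall>f g. Dom C g = Cod C f \<longrightarrow>
        Dom C (Comp C g f) = Dom C f \<and> Cod C (Comp C g f) = Cod C g) \<and>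
     (\<forall>f. Comp C f (Id C (Dom C f)) = f \<and> Comp C (Id C (Cod C f)) f = f) \<and>
     (\<forall>f g h. Dom C g = Cod C f \<longrightarrow> Dom C h = Cod C g \<longrightarrow>
        Comp C h (Comp C g f) = Comp C (Comp C h g) f)"

record ('a,'b,'c,'d) ftr =
  fo :: "'a \<Rightarrow> 'c"
  fa :: "'b \<Rightarrow> 'd"

definition "functor" :: "('a,'b) cat \<Rightarrow> ('c,'d) cat \<Rightarrow> ('a,'b,'c,'d) ftr \<Rightarrow> bool" where
  "functor C D F \<longleftrightarrow> category C \<and> category D \<and>
     (\<forall>f. Dom D (fa F f) = fo F (Dom C f) \<and> Cod D (fa F f) = fo F (Cod C f)) \<and>
     (\<forall>x. fa F (Id C x) = Id D (fo F x)) \<and>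
     (\<forall>f g. Dom C g = Cod C f \<longrightarrow> fa F (Comp C g f) = Comp D (fa F g) (fa F f))"

definition fcomp :: "('c,'d,'e,'f) ftr \<Rightarrow> ('a,'b,'c,'d) ftr \<Rightarrow> ('a,'b,'e,'f) ftr" where
  "fcomp G F = \<lparr>fo = fo G \<circ> fo F, fa = fa G \<circ> fa F\<rparr>"

definition fid :: "('a,'b,'a,'b) ftr" where
  "fid = \<lparr>fo = id, fa = id\<rparr>"

definition natural :: "('a,'b) cat \<Rightarrow> ('c,'d) cat \<Rightarrow> ('a,'b,'c,'d) ftr \<Rightarrow> ('a,'b,'c,'d) ftr
    \<Rightarrow> ('a \<Rightarrow> 'd) \<Rightarrow> bool" where
  "natural C D F G \<alpha> \<longleftrightarrow> functor C D F \<and> functor C D G \<and>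
     (\<forall>x. Dom D (\<alpha> x) = fo F x \<and> Cod D (\<alpha> x) = fo G x) \<and>
     (\<forall>f. Comp D (\<alpha> (Cod C f)) (fa F f) = Comp D (fa G f) (\<alpha> (Dom C f)))"

definition inverse_nt :: "('c,'d) cat \<Rightarrow> ('a \<Rightarrow> 'd) \<Rightarrow> ('a \<Rightarrow> 'd) \<Rightarrow> bool" where
  "inverse_nt D \<alpha> \<beta> \<longleftrightarrow> (\<forall>x. Dom D (\<beta> x) = Cod D (\<alpha> x) \<and> Cod D (\<beta> x) = Dom D (\<alpha> x) \<and>
      Comp D (\<beta> x) (\<alpha> x) = Id D (Dom D (\<alpha> x)) \<and> Comp D (\<alpha> x) (\<beta> x) = Id D (Cod D (\<alpha> x)))"

definition adjunction :: "('a,'am) cat \<Rightarrow> ('t,'tm) cat \<Rightarrow> ('a,'am,'t,'tm) ftr \<Rightarrow> ('t,'tm,'a,'am) ftr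
    \<Rightarrow> ('a \<Rightarrow> 'am) \<Rightarrow> ('t \<Rightarrow> 'tm) \<Rightarrow> bool" where
  "adjunction A T N R \<eta> \<epsilon> \<longleftrightarrow> functor A T N \<and> functor T A R \<and>
     natural A A fid (fcomp R N) \<eta> \<and> natural T T (fcomp N R) fid \<epsilon> \<and>
     (\<forall>x. Comp T (\<epsilon> (fo N x)) (fa N (\<eta> x)) = Id T (fo N x)) \<and>
     (\<forall>y. Comp A (fa R (\<epsilon> y)) (\<eta> (fo R y)) = Id A (fo R y))"

definition comonad :: "('a,'am) cat \<Rightarrow> ('a,'am,'a,'am) ftr \<Rightarrow> ('a \<Rightarrow> 'am) \<Rightarrow> ('a \<Rightarrow> 'am) \<Rightarrow> bool" where
  "comonad A C \<Delta> \<epsilon> \<longleftrightarrow> functor A A C \<and>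
     natural A A C (fcomp C C) \<Delta> \<and> natural A A C fid \<epsilon> \<and>
     (\<forall>x. Comp A (\<epsilon> (fo C x)) (\<Delta> x) = Id A (fo C x)) \<and>
     (\<forall>x. Comp A (fa C (\<epsilon> x)) (\<Delta> x) = Id A (fo C x)) \<and>
     (\<forall>x. Comp A (\<Delta> (fo C x)) (\<Delta> x) = Comp A (fa C (\<Delta> x)) (\<Delta> x))"

text \<open>Comonad arrow (R_A, \<xi>) from (C,\<Delta>,\<epsilon>) to the comonad N_B R_B
  (comultiplication N_B \<eta>^B R_B, counit \<epsilon>^B); \<xi> : C R_A \<Rightarrow> R_A N_B R_B.\<close>

definition comonad_arrow :: "('a,'am) cat \<Rightarrow> ('t,'tm) cat
    \<Rightarrow> ('a,'am,'a,'am) ftr \<Rightarrow> ('a \<Rightarrow> 'am) \<Rightarrow> ('a \<Rightarrow> 'am)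
    \<Rightarrow> ('b,'bm,'t,'tm) ftr \<Rightarrow> ('t,'tm,'b,'bm) ftr \<Rightarrow> ('b \<Rightarrow> 'bm) \<Rightarrow> ('t \<Rightarrow> 'tm)
    \<Rightarrow> ('t,'tm,'a,'am) ftr \<Rightarrow> ('t \<Rightarrow> 'am) \<Rightarrow> bool" where
  "comonad_arrow A T C \<Delta> \<epsilon> NB RB \<eta>B \<epsilon>B RA \<xi> \<longleftrightarrow>
     natural T A (fcomp C RA) (fcomp RA (fcomp NB RB)) \<xi> \<and>
     (\<forall>y. Comp A (fa RA (\<epsilon>B y)) (\<xi> y) = \<epsilon> (fo RA y)) \<and>
     (\<forall>y. Comp A (fa RA (fa NB (\<eta>B (fo RB y)))) (\<xi> y) =
          Comp A (\<xi> (fo NB (fo RB y))) (Comp A (fa C (\<xi> y)) (\<Delta> (fo RA y))))"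

definition rarr_obj :: "('a,'am) cat \<Rightarrow> ('b,'bm) cat \<Rightarrow> ('t,'tm) cat
    \<Rightarrow> ('a,'am,'t,'tm) ftr \<Rightarrow> ('t,'tm,'a,'am) ftr \<Rightarrow> ('a \<Rightarrow> 'am) \<Rightarrow> ('t \<Rightarrow> 'tm)
    \<Rightarrow> ('b,'bm,'t,'tm) ftr \<Rightarrow> ('t,'tm,'b,'bm) ftr \<Rightarrow> ('b \<Rightarrow> 'bm) \<Rightarrow> ('t \<Rightarrow> 'tm)
    \<Rightarrow> ('a,'am,'a,'am) ftr \<Rightarrow> ('a \<Rightarrow> 'am) \<Rightarrow> ('a \<Rightarrow> 'am) \<Rightarrow> ('t \<Rightarrow> 'am) \<Rightarrow> bool" where
  "rarr_obj A B T NA RA \<eta>A \<epsilon>A NB RB \<eta>B \<epsilon>B C \<Delta> \<epsilon> \<xi> \<longleftrightarrow>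
     category A \<and> category B \<and> category T \<and>
     adjunction A T NA RA \<eta>A \<epsilon>A \<and> adjunction B T NB RB \<eta>B \<epsilon>B \<and>
     comonad A C \<Delta> \<epsilon> \<and> comonad_arrow A T C \<Delta> \<epsilon> NB RB \<eta>B \<epsilon>B RA \<xi> \<and>
     (\<exists>\<xi>i. inverse_nt A \<xi> \<xi>i)"

definition comonad_mor :: "('a,'am) cat \<Rightarrow> ('a,'am,'a,'am) ftr \<Rightarrow> ('a \<Rightarrow> 'am) \<Rightarrow> ('a \<Rightarrow> 'am)
    \<Rightarrow> ('a,'am,'a,'am) ftr \<Rightarrow> ('a \<Rightarrow> 'am) \<Rightarrow> ('a \<Rightarrow> 'am) \<Rightarrow> ('a \<Rightarrow> 'am) \<Rightarrow> bool" where
  "comonad_mor A C \<Delta> \<epsilon> C' \<Delta>' \<epsilon>' t \<longleftrightarrow> natural A A C C' t \<and>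
     (\<forall>x. Comp A (\<epsilon>' x) (t x) = \<epsilon> x) \<and>
     (\<forall>x. Comp A (\<Delta>' x) (t x) = Comp A (Comp A (fa C' (t x)) (t (fo C x))) (\<Delta> x))"

text \<open>For F : T' \<rightarrow> T with R F = R', the comparison (\<epsilon> F N') \<circ> (N \<eta>') : N \<Rightarrow> F N'
  (this is a when applied to the A-adjunctions, b for the B-adjunctions).\<close>

definition cmp :: "('t,'tm) cat \<Rightarrow> ('a,'am,'t,'tm) ftr \<Rightarrow> ('t \<Rightarrow> 'tm)
    \<Rightarrow> ('s,'sm,'t,'tm) ftr \<Rightarrow> ('a,'am,'s,'sm) ftr \<Rightarrow> ('a \<Rightarrow> 'am) \<Rightarrow> 'a \<Rightarrow> 'tm" where
  "cmp T N \<epsilon> F N' \<eta>' x = Comp T (\<epsilon> (fo F (fo N' x))) (fa N (\<eta>' x))"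

definition rarr_mor :: "('a,'am) cat \<Rightarrow> ('b,'bm) cat \<Rightarrow> ('t,'tm) cat \<Rightarrow> ('s,'sm) cat
    \<Rightarrow> ('t,'tm,'a,'am) ftr \<Rightarrow> ('b,'bm,'t,'tm) ftr \<Rightarrow> ('t,'tm,'b,'bm) ftr \<Rightarrow> ('t \<Rightarrow> 'tm)
    \<Rightarrow> ('a,'am,'a,'am) ftr \<Rightarrow> ('a \<Rightarrow> 'am) \<Rightarrow> ('a \<Rightarrow> 'am) \<Rightarrow> ('t \<Rightarrow> 'am)
    \<Rightarrow> ('s,'sm,'a,'am) ftr \<Rightarrow> ('b,'bm,'s,'sm) ftr \<Rightarrow> ('s,'sm,'b,'bm) ftr \<Rightarrow> ('b \<Rightarrow> 'bm)
    \<Rightarrow> ('a,'am,'a,'am) ftr \<Rightarrow> ('a \<Rightarrow> 'am) \<Rightarrow> ('a \<Rightarrow> 'am) \<Rightarrow> ('s \<Rightarrow> 'am)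
    \<Rightarrow> ('s,'sm,'t,'tm) ftr \<Rightarrow> ('a \<Rightarrow> 'am) \<Rightarrow> bool" where
  "rarr_mor A B T T' RA NB RB \<epsilon>B C \<Delta> \<epsilon> \<xi> R'A N'B R'B \<eta>'B C' \<Delta>' \<epsilon>' \<xi>' F t \<longleftrightarrow>
     functor T' T F \<and> fcomp RA F = R'A \<and> fcomp RB F = R'B \<and>
     comonad_mor A C \<Delta> \<epsilon> C' \<Delta>' \<epsilon>' t \<and>
     (\<forall>y. Comp A (fa RA (cmp T NB \<epsilon>B F N'B \<eta>'B (fo R'B y))) (\<xi> (fo F y)) =
          Comp A (\<xi>' y) (t (fo R'A y)))"

definition pre_torsor :: "('a,'am) cat \<Rightarrow> ('b,'bm) cat \<Rightarrow> ('t,'tm) cat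
    \<Rightarrow> ('a,'am,'t,'tm) ftr \<Rightarrow> ('t,'tm,'a,'am) ftr \<Rightarrow> ('a \<Rightarrow> 'am) \<Rightarrow> ('t \<Rightarrow> 'tm)
    \<Rightarrow> ('b,'bm,'t,'tm) ftr \<Rightarrow> ('t,'tm,'b,'bm) ftr \<Rightarrow> ('b \<Rightarrow> 'bm) \<Rightarrow> ('t \<Rightarrow> 'tm)
    \<Rightarrow> ('b \<Rightarrow> 'am) \<Rightarrow> bool" where
  "pre_torsor A B T NA RA \<eta>A \<epsilon>A NB RB \<eta>B \<epsilon>B \<tau> \<longleftrightarrow>
     category A \<and> category B \<and> category T \<and>
     adjunction A T NA RA \<eta>A \<epsilon>A \<and> adjunction B T NB RB \<eta>B \<epsilon>B \<and>
     natural B A (fcomp RA NB) (fcomp RA (fcomp NB (fcomp RB (fcomp NA (fcomp RA NB))))) \<tau> \<and>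
     (\<forall>x. Comp A (fa RA (fa NB (fa RB (\<epsilon>A (fo NB x))))) (\<tau> x) = fa RA (fa NB (\<eta>B x))) \<and>
     (\<forall>x. Comp A (fa RA (\<epsilon>B (fo NA (fo RA (fo NB x))))) (\<tau> x) = \<eta>A (fo RA (fo NB x))) \<and>
     (\<forall>x. Comp A (fa RA (fa NB (fa RB (fa NA (\<tau> x))))) (\<tau> x) =
          Comp A (\<tau> (fo RB (fo NA (fo RA (fo NB x))))) (\<tau> x))"

definition mk_tau :: "('a,'am) cat \<Rightarrow> ('a,'am,'a,'am) ftr
    \<Rightarrow> ('a,'am,'t,'tm) ftr \<Rightarrow> ('t,'tm,'a,'am) ftr \<Rightarrow> ('a \<Rightarrow> 'am)
    \<Rightarrow> ('b,'bm,'t,'tm) ftr \<Rightarrow> ('b \<Rightarrow> 'bm) \<Rightarrow> ('t \<Rightarrow> 'am) \<Rightarrow> ('t \<Rightarrow> 'am) \<Rightarrow> 'b \<Rightarrow> 'am" where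
  "mk_tau A C NA RA \<eta>A NB \<eta>B \<xi> \<xi>i x =
     Comp A (\<xi> (fo NA (fo RA (fo NB x))))
       (Comp A (fa C (\<eta>A (fo RA (fo NB x))))
         (Comp A (\<xi>i (fo NB x)) (fa RA (fa NB (\<eta>B x)))))"

text \<open>Morphism of pre-torsors: F : T' \<rightarrow> T with R_A F = R'_A, R_B F = R'_B and
  (R_A b R_B a R_A b) \<circ> \<tau> = \<tau>' \<circ> (R_A b), the horizontal composite written componentwise.\<close>

definition pretorsor_mor :: "('a,'am) cat \<Rightarrow> ('b,'bm) cat \<Rightarrow> ('t,'tm) cat \<Rightarrow> ('s,'sm) cat
    \<Rightarrow> ('a,'am,'t,'tm) ftr \<Rightarrow> ('t,'tm,'a,'am) ftr \<Rightarrow> ('t \<Rightarrow> 'tm)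
    \<Rightarrow> ('b,'bm,'t,'tm) ftr \<Rightarrow> ('t,'tm,'b,'bm) ftr \<Rightarrow> ('t \<Rightarrow> 'tm) \<Rightarrow> ('b \<Rightarrow> 'am)
    \<Rightarrow> ('a,'am,'s,'sm) ftr \<Rightarrow> ('s,'sm,'a,'am) ftr \<Rightarrow> ('a \<Rightarrow> 'am)
    \<Rightarrow> ('b,'bm,'s,'sm) ftr \<Rightarrow> ('s,'sm,'b,'bm) ftr \<Rightarrow> ('b \<Rightarrow> 'bm) \<Rightarrow> ('b \<Rightarrow> 'am)
    \<Rightarrow> ('s,'sm,'t,'tm) ftr \<Rightarrow> bool" where
  "pretorsor_mor A B T T' NA RA \<epsilon>A NB RB \<epsilon>B \<tau> N'A R'A \<eta>'A N'B R'B \<eta>'B \<tau>' F \<longleftrightarrow>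
     functor T' T F \<and> fcomp RA F = R'A \<and> fcomp RB F = R'B \<and>
     (let a = cmp T NA \<epsilon>A F N'A \<eta>'A; b = cmp T NB \<epsilon>B F N'B \<eta>'B;
          L = (\<lambda>x. Comp T (fa F (fa N'A (fa RA (b x)))) (a (fo RA (fo NB x))));
          H = (\<lambda>x. Comp T (fa F (fa N'B (fa RB (L x)))) (b (fo RB (fo NA (fo RA (fo NB x))))))
      in \<forall>x. Comp A (fa RA (H x)) (\<tau> x) = Comp A (\<tau>' x) (fa RA (b x)))"

end

theory Submission
  imports Defs
begin


lemma fo_fcomp[simp]: "fo (fcomp G F) = fo G \<circ> fo F" and fa_fcomp[simp]: "fa (fcomp G F) = fa G \<circ> fa F"
  by (simp_all add: fcomp_def)
lemma fo_fid[simp]: "fo fid = id" and fa_fid[simp]: "fa fid = id" by (simp_all add: fid_def)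

lemma catD: assumes "category C"
  shows "\<And>x. Dom C (Id C x) = x" "\<And>x. Cod C (Id C x) = x"
    "\<And>f g. Dom C g = Cod C f \<Longrightarrow> Dom C (Comp C g f) = Dom C f"
    "\<And>f g. Dom C g = Cod C f \<Longrightarrow> Cod C (Comp C g f) = Cod C g"
    "\<And>f. Comp C f (Id C (Dom C f)) = f" "\<And>f. Comp C (Id C (Cod C f)) f = f"
    "\<And>f g h. Dom C g = Cod C f \<Longrightarrow> Dom C h = Cod C g \<Longrightarrow>
        Comp C h (Comp C g f) = Comp C (Comp C h g) f"
  using assms unfolding category_def by blast+

lemma cat_dom_comp[simp]: "category C \<Longrightarrow> Dom C g = Cod C f \<Longrightarrow> Dom C (Comp C g f) = Dom C f"
  by (rule catD(3))
lemma cat_cod_comp[simp]: "category C \<Longrightarrow> Dom C g = Cod C f \<Longrightarrow> Cod C (Comp C g f) = Cod C g"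
  by (rule catD(4))
lemma cat_dom_id[simp]: "category C \<Longrightarrow> Dom C (Id C x) = x" by (rule catD(1))
lemma cat_cod_id[simp]: "category C \<Longrightarrow> Cod C (Id C x) = x" by (rule catD(2))
lemma cat_assoc: "category C \<Longrightarrow> Dom C g = Cod C f \<Longrightarrow> Dom C h = Cod C g \<Longrightarrow>
  Comp C (Comp C h g) f = Comp C h (Comp C g f)" by (rule catD(7)[symmetric])
lemma cat_idl[simp]: "category C \<Longrightarrow> Cod C f = x \<Longrightarrow> Comp C (Id C x) f = f" using catD(6) by metis
lemma cat_idr[simp]: "category C \<Longrightarrow> Dom C f = x \<Longrightarrow> Comp C f (Id C x) = f" using catD(5) by metis

lemma tail: "category C \<Longrightarrow> Comp C g f = Comp C g' f' \<Longrightarrow> Dom C g = Cod C f \<Longrightarrow> Dom C g' = Cod C f'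
  \<Longrightarrow> Dom C f = Cod C h \<Longrightarrow> Dom C f' = Cod C h \<Longrightarrow> Comp C g (Comp C f h) = Comp C g' (Comp C f' h)"
  by (simp add: cat_assoc[symmetric])

lemma fun_cat1: "functor C D F \<Longrightarrow> category C" and fun_cat2: "functor C D F \<Longrightarrow> category D"
  unfolding functor_def by blast+
lemma fun_dom: "functor C D F \<Longrightarrow> Dom D (fa F f) = fo F (Dom C f)" unfolding functor_def by blast
lemma fun_cod: "functor C D F \<Longrightarrow> Cod D (fa F f) = fo F (Cod C f)" unfolding functor_def by blast
lemma fun_id: "functor C D F \<Longrightarrow> fa F (Id C x) = Id D (fo F x)" unfolding functor_def by blast
lemma fun_comp: "functor C D F \<Longrightarrow> Dom C g = Cod C f \<Longrightarrow> fa F (Comp C g f) = Comp D (fa F g) (fa F f)"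
  unfolding functor_def by blast
lemma functor_fcomp: "functor B C G \<Longrightarrow> functor A B F \<Longrightarrow> functor A C (fcomp G F)"
  apply (unfold functor_def[of A C])
  apply (intro conjI allI impI)
  apply (simp_all add: fun_cat1 fun_cat2 fun_dom fun_cod fun_id fun_comp)
  done
lemma functor_fid: "category A \<Longrightarrow> functor A A fid"
  unfolding functor_def by simp

lemma fun_eq: "functor C D F \<Longrightarrow> Comp C g f = Comp C g' f' \<Longrightarrow> Dom C g = Cod C f \<Longrightarrow> Dom C g' = Cod C f'
  \<Longrightarrow> Comp D (fa F g) (fa F f) = Comp D (fa F g') (fa F f')"
proof -
  assume F: "functor C D F" and e: "Comp C g f = Comp C g' f'" and d1: "Dom C g = Cod C f" and d2: "Dom C g' = Cod C f'"
  have "fa F (Comp C g f) = fa F (Comp C g' f')" using e by simp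
  then show ?thesis using fun_comp[OF F d1] fun_comp[OF F d2] by simp
qed

lemma tailR: "category C \<Longrightarrow> Comp C g f = r \<Longrightarrow> Dom C g = Cod C f \<Longrightarrow> Dom C f = Cod C h
  \<Longrightarrow> Comp C g (Comp C f h) = Comp C r h"
  by (drule sym, simp add: cat_assoc)
lemma tailR3: "category C \<Longrightarrow> Comp C g (Comp C f e) = r \<Longrightarrow> Dom C g = Cod C f \<Longrightarrow> Dom C f = Cod C e
  \<Longrightarrow> Dom C e = Cod C h \<Longrightarrow> Comp C g (Comp C f (Comp C e h)) = Comp C r h"
  by (drule sym, simp add: cat_assoc)

lemma fun_eqR: "functor C D F \<Longrightarrow> Comp C g f = r \<Longrightarrow> Dom C g = Cod C f
  \<Longrightarrow> Comp D (fa F g) (fa F f) = fa F r"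
  by (drule sym, simp add: fun_comp)



locale rarr =
  fixes A :: "('a,'am) cat" and B :: "('b,'bm) cat" and T :: "('t,'tm) cat"
    and NA :: "('a,'am,'t,'tm) ftr" and RA :: "('t,'tm,'a,'am) ftr"
    and \<eta>A :: "'a \<Rightarrow> 'am" and \<epsilon>A :: "'t \<Rightarrow> 'tm"
    and NB :: "('b,'bm,'t,'tm) ftr" and RB :: "('t,'tm,'b,'bm) ftr"
    and \<eta>B :: "'b \<Rightarrow> 'bm" and \<epsilon>B :: "'t \<Rightarrow> 'tm"
    and C :: "('a,'am,'a,'am) ftr" and \<Delta> :: "'a \<Rightarrow> 'am" and \<epsilon> :: "'a \<Rightarrow> 'am"
    and \<xi> :: "'t \<Rightarrow> 'am" and \<xi>i :: "'t \<Rightarrow> 'am"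
  assumes obj: "rarr_obj A B T NA RA \<eta>A \<epsilon>A NB RB \<eta>B \<epsilon>B C \<Delta> \<epsilon> \<xi>"
    and inv: "inverse_nt A \<xi> \<xi>i"
begin

lemma catA[simp]: "category A" and catB[simp]: "category B" and catT[simp]: "category T"
  using obj by (simp_all add: rarr_obj_def)

lemma adjA: "adjunction A T NA RA \<eta>A \<epsilon>A" and adjB: "adjunction B T NB RB \<eta>B \<epsilon>B"
  and cmd: "comonad A C \<Delta> \<epsilon>" and carr: "comonad_arrow A T C \<Delta> \<epsilon> NB RB \<eta>B \<epsilon>B RA \<xi>"
  using obj by (simp_all add: rarr_obj_def)

lemma fNA: "functor A T NA" and fRA: "functor T A RA" and fNB: "functor B T NB" and fRB: "functor T B RB"
  and fC: "functor A A C"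
  using adjA adjB cmd by (simp_all add: adjunction_def comonad_def)

lemmas fdom[simp] = fun_dom[OF fNA] fun_dom[OF fRA] fun_dom[OF fNB] fun_dom[OF fRB] fun_dom[OF fC]
lemmas fcod[simp] = fun_cod[OF fNA] fun_cod[OF fRA] fun_cod[OF fNB] fun_cod[OF fRB] fun_cod[OF fC]
lemmas fid'[simp] = fun_id[OF fNA] fun_id[OF fRA] fun_id[OF fNB] fun_id[OF fRB] fun_id[OF fC]
lemmas fcmp = fun_comp[OF fNA] fun_comp[OF fRA] fun_comp[OF fNB] fun_comp[OF fRB] fun_comp[OF fC]

lemma \<eta>A_dom[simp]: "Dom A (\<eta>A x) = x" and \<eta>A_cod[simp]: "Cod A (\<eta>A x) = fo RA (fo NA x)"
  and \<eta>A_nat: "Comp A (\<eta>A (Cod A f)) f = Comp A (fa RA (fa NA f)) (\<eta>A (Dom A f))"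
  and \<epsilon>A_dom[simp]: "Dom T (\<epsilon>A y) = fo NA (fo RA y)" and \<epsilon>A_cod[simp]: "Cod T (\<epsilon>A y) = y"
  and \<epsilon>A_nat: "Comp T (\<epsilon>A (Cod T g)) (fa NA (fa RA g)) = Comp T g (\<epsilon>A (Dom T g))"
  and triA1: "Comp T (\<epsilon>A (fo NA x)) (fa NA (\<eta>A x)) = Id T (fo NA x)"
  and triA2: "Comp A (fa RA (\<epsilon>A y)) (\<eta>A (fo RA y)) = Id A (fo RA y)"
  using adjA unfolding adjunction_def natural_def by auto

lemma \<eta>B_dom[simp]: "Dom B (\<eta>B x) = x" and \<eta>B_cod[simp]: "Cod B (\<eta>B x) = fo RB (fo NB x)"
  and \<eta>B_nat: "Comp B (\<eta>B (Cod B f)) f = Comp B (fa RB (fa NB f)) (\<eta>B (Dom B f))"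
  and \<epsilon>B_dom[simp]: "Dom T (\<epsilon>B y) = fo NB (fo RB y)" and \<epsilon>B_cod[simp]: "Cod T (\<epsilon>B y) = y"
  and \<epsilon>B_nat: "Comp T (\<epsilon>B (Cod T g)) (fa NB (fa RB g)) = Comp T g (\<epsilon>B (Dom T g))"
  and triB1: "Comp T (\<epsilon>B (fo NB x)) (fa NB (\<eta>B x)) = Id T (fo NB x)"
  and triB2: "Comp B (fa RB (\<epsilon>B y)) (\<eta>B (fo RB y)) = Id B (fo RB y)"
  using adjB unfolding adjunction_def natural_def by auto

lemma \<Delta>_dom[simp]: "Dom A (\<Delta> x) = fo C x" and \<Delta>_cod[simp]: "Cod A (\<Delta> x) = fo C (fo C x)"
  and \<Delta>_nat: "Comp A (\<Delta> (Cod A f)) (fa C f) = Comp A (fa C (fa C f)) (\<Delta> (Dom A f))"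
  and \<epsilon>_dom[simp]: "Dom A (\<epsilon> x) = fo C x" and \<epsilon>_cod[simp]: "Cod A (\<epsilon> x) = x"
  and \<epsilon>_nat: "Comp A (\<epsilon> (Cod A f)) (fa C f) = Comp A f (\<epsilon> (Dom A f))"
  using cmd unfolding comonad_def natural_def by auto

lemma \<xi>_dom[simp]: "Dom A (\<xi> y) = fo C (fo RA y)" and \<xi>_cod[simp]: "Cod A (\<xi> y) = fo RA (fo NB (fo RB y))"
  and \<xi>_nat: "Comp A (\<xi> (Cod T g)) (fa C (fa RA g)) = Comp A (fa RA (fa NB (fa RB g))) (\<xi> (Dom T g))"
  and \<xi>1: "Comp A (fa RA (\<epsilon>B y)) (\<xi> y) = \<epsilon> (fo RA y)"
  and \<xi>2: "Comp A (fa RA (fa NB (\<eta>B (fo RB y)))) (\<xi> y) =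
          Comp A (\<xi> (fo NB (fo RB y))) (Comp A (fa C (\<xi> y)) (\<Delta> (fo RA y)))"
  using carr unfolding comonad_arrow_def natural_def by auto

lemma \<xi>i_dom[simp]: "Dom A (\<xi>i y) = fo RA (fo NB (fo RB y))" and \<xi>i_cod[simp]: "Cod A (\<xi>i y) = fo C (fo RA y)"
  and \<xi>i\<xi>: "Comp A (\<xi>i y) (\<xi> y) = Id A (fo C (fo RA y))"
  and \<xi>\<xi>i: "Comp A (\<xi> y) (\<xi>i y) = Id A (fo RA (fo NB (fo RB y)))"
  using inv unfolding inverse_nt_def by auto

end

context rarr begin

abbreviation cA (infixr "\<cdot>" 55) where "g \<cdot> f \<equiv> Comp A g f"

lemmas tA = tailR[OF catA] and tA3 = tailR3[OF catA]

lemma \<xi>i_nat: "\<xi>i (Cod T g) \<cdot> fa RA (fa NB (fa RB g)) = fa C (fa RA g) \<cdot> \<xi>i (Dom T g)"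
proof -
  have "\<xi>i (Cod T g) \<cdot> fa RA (fa NB (fa RB g)) = \<xi>i (Cod T g) \<cdot> fa RA (fa NB (fa RB g)) \<cdot> \<xi> (Dom T g) \<cdot> \<xi>i (Dom T g)"
    by (simp add: \<xi>\<xi>i)
  also have "\<dots> = \<xi>i (Cod T g) \<cdot> \<xi> (Cod T g) \<cdot> fa C (fa RA g) \<cdot> \<xi>i (Dom T g)"
    by (subst tA[OF \<xi>_nat[of g, symmetric]], simp_all add: cat_assoc)
  also have "\<dots> = fa C (fa RA g) \<cdot> \<xi>i (Dom T g)"
    by (subst tA[OF \<xi>i\<xi>], simp_all)
  finally show ?thesis .
qed

lemma \<xi>2i': "\<xi>i (fo NB (fo RB y)) \<cdot> fa RA (fa NB (\<eta>B (fo RB y))) = fa C (\<xi> y) \<cdot> \<Delta> (fo RA y) \<cdot> \<xi>i y"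
proof -
  have "\<xi>i (fo NB (fo RB y)) \<cdot> fa RA (fa NB (\<eta>B (fo RB y))) = \<xi>i (fo NB (fo RB y)) \<cdot> fa RA (fa NB (\<eta>B (fo RB y))) \<cdot> \<xi> y \<cdot> \<xi>i y"
    by (simp add: \<xi>\<xi>i)
  also have "\<dots> = \<xi>i (fo NB (fo RB y)) \<cdot> \<xi> (fo NB (fo RB y)) \<cdot> fa C (\<xi> y) \<cdot> \<Delta> (fo RA y) \<cdot> \<xi>i y"
    by (subst tA[OF \<xi>2], simp_all add: cat_assoc)
  also have "\<dots> = fa C (\<xi> y) \<cdot> \<Delta> (fo RA y) \<cdot> \<xi>i y"
    by (subst tA[OF \<xi>i\<xi>], simp_all)
  finally show ?thesis .
qed

lemma \<xi>2i: "\<xi>i (fo NB (fo RB y)) \<cdot> fa RA (fa NB (\<eta>B (fo RB y))) \<cdot> \<xi> y = fa C (\<xi> y) \<cdot> \<Delta> (fo RA y)"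
  by (subst tA[OF \<xi>2i'], simp_all add: cat_assoc \<xi>i\<xi>)


lemma \<xi>1i: "\<epsilon> (fo RA y) \<cdot> \<xi>i y = fa RA (\<epsilon>B y)"
proof -
  have "\<epsilon> (fo RA y) \<cdot> \<xi>i y = (fa RA (\<epsilon>B y) \<cdot> \<xi> y) \<cdot> \<xi>i y" by (simp add: \<xi>1)
  also have "\<dots> = fa RA (\<epsilon>B y) \<cdot> (\<xi> y \<cdot> \<xi>i y)" by (simp add: cat_assoc)
  finally show ?thesis by (simp add: \<xi>\<xi>i)
qed

definition sig where "sig y = \<xi> (fo NA (fo RA y)) \<cdot> fa C (\<eta>A (fo RA y)) \<cdot> \<xi>i y"

lemma sig_dom[simp]: "Dom A (sig y) = fo RA (fo NB (fo RB y))"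
  and sig_cod[simp]: "Cod A (sig y) = fo RA (fo NB (fo RB (fo NA (fo RA y))))"
  by (simp_all add: sig_def)

lemma sig_nat: "sig (Cod T g) \<cdot> fa RA (fa NB (fa RB g)) = fa RA (fa NB (fa RB (fa NA (fa RA g)))) \<cdot> sig (Dom T g)"
proof -
  have e1: "fa C (\<eta>A (fo RA (Cod T g))) \<cdot> fa C (fa RA g) = fa C (fa RA (fa NA (fa RA g))) \<cdot> fa C (\<eta>A (fo RA (Dom T g)))"
    by (rule fun_eq[OF fC \<eta>A_nat[of "fa RA g"], simplified]; simp)
  have "sig (Cod T g) \<cdot> fa RA (fa NB (fa RB g)) = \<xi> (fo NA (fo RA (Cod T g))) \<cdot> fa C (\<eta>A (fo RA (Cod T g))) \<cdot> \<xi>i (Cod T g) \<cdot> fa RA (fa NB (fa RB g))"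
    by (simp add: sig_def cat_assoc)
  also have "\<dots> = \<xi> (fo NA (fo RA (Cod T g))) \<cdot> fa C (\<eta>A (fo RA (Cod T g))) \<cdot> fa C (fa RA g) \<cdot> \<xi>i (Dom T g)"
    by (subst \<xi>i_nat, rule refl)
  also have "\<dots> = \<xi> (fo NA (fo RA (Cod T g))) \<cdot> fa C (fa RA (fa NA (fa RA g))) \<cdot> fa C (\<eta>A (fo RA (Dom T g))) \<cdot> \<xi>i (Dom T g)"
    by (subst tA[OF e1], simp_all add: cat_assoc)
  also have "\<dots> = fa RA (fa NB (fa RB (fa NA (fa RA g)))) \<cdot> \<xi> (fo NA (fo RA (Dom T g))) \<cdot> fa C (\<eta>A (fo RA (Dom T g))) \<cdot> \<xi>i (Dom T g)"
    by (subst tA[OF \<xi>_nat[of "fa NA (fa RA g)", simplified]], simp_all add: cat_assoc)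
  finally show ?thesis by (simp add: sig_def)
qed

lemma sig_c1: "fa RA (fa NB (fa RB (\<epsilon>A y))) \<cdot> sig y = Id A (fo RA (fo NB (fo RB y)))"
proof -
  have e1: "fa C (fa RA (\<epsilon>A y)) \<cdot> fa C (\<eta>A (fo RA y)) = Id A (fo C (fo RA y))"
    by (subst fun_eqR[OF fC triA2[of y]]; simp)
  have "fa RA (fa NB (fa RB (\<epsilon>A y))) \<cdot> sig y = fa RA (fa NB (fa RB (\<epsilon>A y))) \<cdot> \<xi> (fo NA (fo RA y)) \<cdot> fa C (\<eta>A (fo RA y)) \<cdot> \<xi>i y"
    by (simp add: sig_def)
  also have "\<dots> = \<xi> y \<cdot> fa C (fa RA (\<epsilon>A y)) \<cdot> fa C (\<eta>A (fo RA y)) \<cdot> \<xi>i y"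
    by (subst tA[OF \<xi>_nat[of "\<epsilon>A y", simplified, symmetric]], simp_all add: cat_assoc)
  also have "\<dots> = \<xi> y \<cdot> \<xi>i y"
    by (subst tA[OF e1], simp_all)
  finally show ?thesis by (simp add: \<xi>\<xi>i)
qed

lemma sig_c2: "fa RA (\<epsilon>B (fo NA (fo RA y))) \<cdot> sig y = \<eta>A (fo RA y) \<cdot> fa RA (\<epsilon>B y)"
proof -
  have "fa RA (\<epsilon>B (fo NA (fo RA y))) \<cdot> sig y = fa RA (\<epsilon>B (fo NA (fo RA y))) \<cdot> \<xi> (fo NA (fo RA y)) \<cdot> fa C (\<eta>A (fo RA y)) \<cdot> \<xi>i y"
    by (simp add: sig_def)
  also have "\<dots> = \<epsilon> (fo RA (fo NA (fo RA y))) \<cdot> fa C (\<eta>A (fo RA y)) \<cdot> \<xi>i y"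
    by (subst tA[OF \<xi>1], simp_all)
  also have "\<dots> = \<eta>A (fo RA y) \<cdot> \<epsilon> (fo RA y) \<cdot> \<xi>i y"
    by (subst tA[OF \<epsilon>_nat[of "\<eta>A (fo RA y)", simplified]], simp_all add: cat_assoc)
  finally show ?thesis by (simp add: \<xi>1i)
qed


lemma sig_xi: "sig y \<cdot> \<xi> y = \<xi> (fo NA (fo RA y)) \<cdot> fa C (\<eta>A (fo RA y))"
  unfolding sig_def by (simp add: cat_assoc \<xi>i\<xi>)

lemma sig_coassoc:
  "fa RA (fa NB (fa RB (fa NA (sig y)))) \<cdot> sig (fo NB (fo RB y)) \<cdot> fa RA (fa NB (\<eta>B (fo RB y))) =
   sig (fo NB (fo RB (fo NA (fo RA y)))) \<cdot> fa RA (fa NB (\<eta>B (fo RB (fo NA (fo RA y))))) \<cdot> sig y"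
proof -
  have e2: "fa C (fa RA (fa NA (sig y))) \<cdot> fa C (\<eta>A (fo RA (fo NB (fo RB y))))
      = fa C (\<eta>A (fo RA (fo NB (fo RB (fo NA (fo RA y)))))) \<cdot> fa C (sig y)"
    by (rule fun_eq[OF fC \<eta>A_nat[of "sig y", symmetric], simplified]; simp)
  have e3: "fa C (sig y) \<cdot> fa C (\<xi> y) = fa C (\<xi> (fo NA (fo RA y))) \<cdot> fa C (fa C (\<eta>A (fo RA y)))"
    by (rule fun_eq[OF fC sig_xi]; simp)
  have "fa RA (fa NB (fa RB (fa NA (sig y)))) \<cdot> sig (fo NB (fo RB y)) \<cdot> fa RA (fa NB (\<eta>B (fo RB y)))
     = fa RA (fa NB (fa RB (fa NA (sig y)))) \<cdot> \<xi> (fo NA (fo RA (fo NB (fo RB y)))) \<cdot> fa C (\<eta>A (fo RA (fo NB (fo RB y))))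
        \<cdot> \<xi>i (fo NB (fo RB y)) \<cdot> fa RA (fa NB (\<eta>B (fo RB y)))"
    by (subst sig_def[of "fo NB (fo RB y)"], simp add: cat_assoc)
  also have "\<dots> = fa RA (fa NB (fa RB (fa NA (sig y)))) \<cdot> \<xi> (fo NA (fo RA (fo NB (fo RB y)))) \<cdot> fa C (\<eta>A (fo RA (fo NB (fo RB y))))
        \<cdot> fa C (\<xi> y) \<cdot> \<Delta> (fo RA y) \<cdot> \<xi>i y"
    by (subst \<xi>2i', rule refl)
  also have "\<dots> = \<xi> (fo NA (fo RA (fo NB (fo RB (fo NA (fo RA y)))))) \<cdot> fa C (fa RA (fa NA (sig y))) \<cdot> fa C (\<eta>A (fo RA (fo NB (fo RB y))))
        \<cdot> fa C (\<xi> y) \<cdot> \<Delta> (fo RA y) \<cdot> \<xi>i y"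
    by (subst tA[OF \<xi>_nat[of "fa NA (sig y)", simplified, symmetric]], simp_all add: cat_assoc)
  also have "\<dots> = \<xi> (fo NA (fo RA (fo NB (fo RB (fo NA (fo RA y)))))) \<cdot> fa C (\<eta>A (fo RA (fo NB (fo RB (fo NA (fo RA y))))))
        \<cdot> fa C (sig y) \<cdot> fa C (\<xi> y) \<cdot> \<Delta> (fo RA y) \<cdot> \<xi>i y"
    by (subst tA[OF e2], simp_all add: cat_assoc)
  also have "\<dots> = \<xi> (fo NA (fo RA (fo NB (fo RB (fo NA (fo RA y)))))) \<cdot> fa C (\<eta>A (fo RA (fo NB (fo RB (fo NA (fo RA y))))))
        \<cdot> fa C (\<xi> (fo NA (fo RA y))) \<cdot> fa C (fa C (\<eta>A (fo RA y))) \<cdot> \<Delta> (fo RA y) \<cdot> \<xi>i y"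
    by (subst tA[OF e3], simp_all add: cat_assoc)
  finally have L: "fa RA (fa NB (fa RB (fa NA (sig y)))) \<cdot> sig (fo NB (fo RB y)) \<cdot> fa RA (fa NB (\<eta>B (fo RB y))) =
     \<xi> (fo NA (fo RA (fo NB (fo RB (fo NA (fo RA y)))))) \<cdot> fa C (\<eta>A (fo RA (fo NB (fo RB (fo NA (fo RA y))))))
        \<cdot> fa C (\<xi> (fo NA (fo RA y))) \<cdot> fa C (fa C (\<eta>A (fo RA y))) \<cdot> \<Delta> (fo RA y) \<cdot> \<xi>i y" .
  have "sig (fo NB (fo RB (fo NA (fo RA y)))) \<cdot> fa RA (fa NB (\<eta>B (fo RB (fo NA (fo RA y))))) \<cdot> sig y
     = \<xi> (fo NA (fo RA (fo NB (fo RB (fo NA (fo RA y)))))) \<cdot> fa C (\<eta>A (fo RA (fo NB (fo RB (fo NA (fo RA y))))))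
        \<cdot> \<xi>i (fo NB (fo RB (fo NA (fo RA y)))) \<cdot> fa RA (fa NB (\<eta>B (fo RB (fo NA (fo RA y))))) \<cdot> \<xi> (fo NA (fo RA y))
        \<cdot> fa C (\<eta>A (fo RA y)) \<cdot> \<xi>i y"
    by (simp add: sig_def cat_assoc)
  also have "\<dots> = \<xi> (fo NA (fo RA (fo NB (fo RB (fo NA (fo RA y)))))) \<cdot> fa C (\<eta>A (fo RA (fo NB (fo RB (fo NA (fo RA y))))))
        \<cdot> fa C (\<xi> (fo NA (fo RA y))) \<cdot> \<Delta> (fo RA (fo NA (fo RA y))) \<cdot> fa C (\<eta>A (fo RA y)) \<cdot> \<xi>i y"
    by (subst tA3[OF \<xi>2i[of "fo NA (fo RA y)"]], simp_all add: cat_assoc)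
  also have "\<dots> = \<xi> (fo NA (fo RA (fo NB (fo RB (fo NA (fo RA y)))))) \<cdot> fa C (\<eta>A (fo RA (fo NB (fo RB (fo NA (fo RA y))))))
        \<cdot> fa C (\<xi> (fo NA (fo RA y))) \<cdot> fa C (fa C (\<eta>A (fo RA y))) \<cdot> \<Delta> (fo RA y) \<cdot> \<xi>i y"
    by (subst tA[OF \<Delta>_nat[of "\<eta>A (fo RA y)", simplified]], simp_all add: cat_assoc)
  finally show ?thesis using L by simp
qed


abbreviation "tau \<equiv> mk_tau A C NA RA \<eta>A NB \<eta>B \<xi> \<xi>i"

lemma tau_sig: "tau x = sig (fo NB x) \<cdot> fa RA (fa NB (\<eta>B x))"
  by (simp add: mk_tau_def sig_def cat_assoc)

lemma \<eta>B2: "fa RA (fa NB (\<eta>B (Cod B f))) \<cdot> fa RA (fa NB f) = fa RA (fa NB (fa RB (fa NB f)))  \<cdot> fa RA (fa NB (\<eta>B (Dom B f)))"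
proof -
  have "Comp T (fa NB (\<eta>B (Cod B f))) (fa NB f) = Comp T (fa NB (fa RB (fa NB f))) (fa NB (\<eta>B (Dom B f)))"
    by (rule fun_eq[OF fNB \<eta>B_nat]; simp)
  then show ?thesis by (rule fun_eq[OF fRA]; simp)
qed

lemma tau_dom[simp]: "Dom A (tau x) = fo RA (fo NB x)"
  and tau_cod[simp]: "Cod A (tau x) = fo RA (fo NB (fo RB (fo NA (fo RA (fo NB x)))))"
  by (simp_all add: tau_sig)

lemma tau_nat: "tau (Cod B f) \<cdot> fa RA (fa NB f) = fa RA (fa NB (fa RB (fa NA (fa RA (fa NB f))))) \<cdot> tau (Dom B f)"
proof -
  have "tau (Cod B f) \<cdot> fa RA (fa NB f) = sig (fo NB (Cod B f)) \<cdot> fa RA (fa NB (\<eta>B (Cod B f))) \<cdot> fa RA (fa NB f)"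
    by (simp add: tau_sig cat_assoc)
  also have "\<dots> = sig (fo NB (Cod B f)) \<cdot> fa RA (fa NB (fa RB (fa NB f))) \<cdot> fa RA (fa NB (\<eta>B (Dom B f)))"
    by (subst \<eta>B2, rule refl)
  also have "\<dots> = fa RA (fa NB (fa RB (fa NA (fa RA (fa NB f))))) \<cdot> sig (fo NB (Dom B f)) \<cdot> fa RA (fa NB (\<eta>B (Dom B f)))"
    by (subst tA[OF sig_nat[of "fa NB f", simplified]], simp_all add: cat_assoc)
  finally show ?thesis by (simp add: tau_sig)
qed

lemma tau_c1: "fa RA (fa NB (fa RB (\<epsilon>A (fo NB x)))) \<cdot> tau x = fa RA (fa NB (\<eta>B x))"
  unfolding tau_sig by (subst tA[OF sig_c1], simp_all)

lemma tau_c2: "fa RA (\<epsilon>B (fo NA (fo RA (fo NB x)))) \<cdot> tau x = \<eta>A (fo RA (fo NB x))"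
proof -
  have e: "fa RA (\<epsilon>B (fo NB x)) \<cdot> fa RA (fa NB (\<eta>B x)) = Id A (fo RA (fo NB x))"
    by (subst fun_eqR[OF fRA triB1]; simp)
  show ?thesis unfolding tau_sig
    by (subst tA[OF sig_c2], simp_all add: cat_assoc e)
qed

lemma tau_coassoc: "fa RA (fa NB (fa RB (fa NA (tau x)))) \<cdot> tau x = tau (fo RB (fo NA (fo RA (fo NB x)))) \<cdot> tau x"
proof -
  have e: "fa RA (fa NB (fa RB (fa NB (\<eta>B x)))) \<cdot> fa RA (fa NB (\<eta>B x)) = fa RA (fa NB (\<eta>B (fo RB (fo NB x)))) \<cdot> fa RA (fa NB (\<eta>B x))"
    using \<eta>B2[of "\<eta>B x"] by simp
  have "fa RA (fa NB (fa RB (fa NA (tau x)))) = fa RA (fa NB (fa RB (fa NA (sig (fo NB x))))) \<cdot> fa RA (fa NB (fa RB (fa NA (fa RA (fa NB (\<eta>B x))))))"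
    by (simp add: tau_sig fcmp)
  then have "fa RA (fa NB (fa RB (fa NA (tau x)))) \<cdot> tau x = fa RA (fa NB (fa RB (fa NA (sig (fo NB x))))) \<cdot> fa RA (fa NB (fa RB (fa NA (fa RA (fa NB (\<eta>B x))))))
      \<cdot> sig (fo NB x) \<cdot> fa RA (fa NB (\<eta>B x))"
    by (simp add: tau_sig cat_assoc)
  also have "\<dots> = fa RA (fa NB (fa RB (fa NA (sig (fo NB x))))) \<cdot> sig (fo NB (fo RB (fo NB x))) \<cdot> fa RA (fa NB (fa RB (fa NB (\<eta>B x))))
      \<cdot> fa RA (fa NB (\<eta>B x))"
    by (subst tA[OF sig_nat[of "fa NB (\<eta>B x)", simplified, symmetric]], simp_all add: cat_assoc)
  also have "\<dots> = fa RA (fa NB (fa RB (fa NA (sig (fo NB x))))) \<cdot> sig (fo NB (fo RB (fo NB x))) \<cdot> fa RA (fa NB (\<eta>B (fo RB (fo NB x))))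
      \<cdot> fa RA (fa NB (\<eta>B x))"
    by (subst e, rule refl)
  also have "\<dots> = sig (fo NB (fo RB (fo NA (fo RA (fo NB x))))) \<cdot> fa RA (fa NB (\<eta>B (fo RB (fo NA (fo RA (fo NB x)))))) \<cdot> sig (fo NB x)
      \<cdot> fa RA (fa NB (\<eta>B x))"
    by (subst tA3[OF sig_coassoc[of "fo NB x"]], simp_all add: cat_assoc)
  finally show ?thesis by (simp add: tau_sig cat_assoc)
qed

lemma part1: "pre_torsor A B T NA RA \<eta>A \<epsilon>A NB RB \<eta>B \<epsilon>B tau"
  unfolding pre_torsor_def
proof (intro conjI allI)
  show "natural B A (fcomp RA NB) (fcomp RA (fcomp NB (fcomp RB (fcomp NA (fcomp RA NB))))) tau"
    unfolding natural_def
    by (simp add: functor_fcomp[OF fRA fNB] functor_fcomp[OF fRA functor_fcomp[OF fNB functor_fcomp[OF fRB functor_fcomp[OF fNA functor_fcomp[OF fRA fNB]]]]] tau_nat)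
qed (simp_all add: adjA adjB tau_c1 tau_c2 tau_coassoc)

end


locale rarr2 = Q: rarr A B T NA RA \<eta>A \<epsilon>A NB RB \<eta>B \<epsilon>B C \<Delta> \<epsilon> \<xi> \<xi>i
  + P: rarr A B T' N'A R'A \<eta>'A \<epsilon>'A N'B R'B \<eta>'B \<epsilon>'B C' \<Delta>' \<epsilon>' \<xi>' \<xi>'i
  for A B T NA RA \<eta>A \<epsilon>A NB RB \<eta>B \<epsilon>B C \<Delta> \<epsilon> \<xi> \<xi>i
    and T' :: "('s,'sm) cat" and N'A R'A \<eta>'A \<epsilon>'A N'B R'B \<eta>'B \<epsilon>'B C' \<Delta>' \<epsilon>' \<xi>' \<xi>'i +
  fixes F t
  assumes mor: "rarr_mor A B T T' RA NB RB \<epsilon>B C \<Delta> \<epsilon> \<xi> R'A N'B R'B \<eta>'B C' \<Delta>' \<epsilon>' \<xi>' F t"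
begin

lemma fF: "functor T' T F" and RAF: "fcomp RA F = R'A" and RBF: "fcomp RB F = R'B"
  and tmor: "comonad_mor A C \<Delta> \<epsilon> C' \<Delta>' \<epsilon>' t"
  and key: "\<And>y. Comp A (fa RA (cmp T NB \<epsilon>B F N'B \<eta>'B (fo R'B y))) (\<xi> (fo F y)) = Comp A (\<xi>' y) (t (fo R'A y))"
  using mor unfolding rarr_mor_def by blast+

lemma RAF_o[simp]: "fo RA (fo F y) = fo R'A y" and RAF_a[simp]: "fa RA (fa F g) = fa R'A g"
  and RBF_o[simp]: "fo RB (fo F y) = fo R'B y" and RBF_a[simp]: "fa RB (fa F g) = fa R'B g"
  using RAF RBF by (metis comp_apply fo_fcomp fa_fcomp)+

lemmas fFdom[simp] = fun_dom[OF fF] and fFcod[simp] = fun_cod[OF fF] and fFid[simp] = fun_id[OF fF]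
  and fFcmp = fun_comp[OF fF]

lemma t_dom[simp]: "Dom A (t x) = fo C x" and t_cod[simp]: "Cod A (t x) = fo C' x"
  and t_nat: "Comp A (t (Cod A f)) (fa C f) = Comp A (fa C' f) (t (Dom A f))"
  using tmor unfolding comonad_mor_def natural_def by auto

abbreviation "bb x \<equiv> cmp T NB \<epsilon>B F N'B \<eta>'B x"
abbreviation "aa x \<equiv> cmp T NA \<epsilon>A F N'A \<eta>'A x"

lemma bb_dom[simp]: "Dom T (bb x) = fo NB x" and bb_cod[simp]: "Cod T (bb x) = fo F (fo N'B x)"
  by (simp_all add: cmp_def)
lemma aa_dom[simp]: "Dom T (aa x) = fo NA x" and aa_cod[simp]: "Cod T (aa x) = fo F (fo N'A x)"
  by (simp_all add: cmp_def)


lemmas tT = tailR[OF Q.catT] and tB = tailR[OF Q.catB]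

lemma bb_nat: "Comp T (bb (Cod B g)) (fa NB g) = Comp T (fa F (fa N'B g)) (bb (Dom B g))"
proof -
  have e: "Comp T (fa NB (\<eta>'B (Cod B g))) (fa NB g) = Comp T (fa NB (fa R'B (fa N'B g))) (fa NB (\<eta>'B (Dom B g)))"
    by (rule fun_eq[OF Q.fNB P.\<eta>B_nat]; simp)
  have "Comp T (bb (Cod B g)) (fa NB g) = Comp T (\<epsilon>B (fo F (fo N'B (Cod B g)))) (Comp T (fa NB (\<eta>'B (Cod B g))) (fa NB g))"
    by (simp add: cmp_def cat_assoc)
  also have "\<dots> = Comp T (\<epsilon>B (fo F (fo N'B (Cod B g)))) (Comp T (fa NB (fa R'B (fa N'B g))) (fa NB (\<eta>'B (Dom B g))))"
    by (subst e, rule refl)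
  also have "\<dots> = Comp T (fa F (fa N'B g)) (Comp T (\<epsilon>B (fo F (fo N'B (Dom B g)))) (fa NB (\<eta>'B (Dom B g))))"
    by (subst tT[OF Q.\<epsilon>B_nat[of "fa F (fa N'B g)", simplified]], simp_all add: cat_assoc)
  finally show ?thesis by (simp add: cmp_def)
qed

lemma eta_b: "Comp B (fa RB (bb x)) (\<eta>B x) = \<eta>'B x"
proof -
  have "Comp B (fa RB (bb x)) (\<eta>B x) = Comp B (fa RB (\<epsilon>B (fo F (fo N'B x)))) (Comp B (fa RB (fa NB (\<eta>'B x))) (\<eta>B x))"
    by (simp add: cmp_def Q.fcmp cat_assoc)
  also have "\<dots> = Comp B (fa RB (\<epsilon>B (fo F (fo N'B x)))) (Comp B (\<eta>B (fo R'B (fo N'B x))) (\<eta>'B x))"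
    by (subst Q.\<eta>B_nat[of "\<eta>'B x", simplified, symmetric], rule refl)
  also have "\<dots> = \<eta>'B x"
    by (subst tB[OF Q.triB2[of "fo F (fo N'B x)", simplified]], simp_all)
  finally show ?thesis .
qed

lemma eta_a: "Comp A (fa RA (aa x)) (\<eta>A x) = \<eta>'A x"
proof -
  have "Comp A (fa RA (aa x)) (\<eta>A x) = Comp A (fa RA (\<epsilon>A (fo F (fo N'A x)))) (Comp A (fa RA (fa NA (\<eta>'A x))) (\<eta>A x))"
    by (simp add: cmp_def Q.fcmp cat_assoc)
  also have "\<dots> = Comp A (fa RA (\<epsilon>A (fo F (fo N'A x)))) (Comp A (\<eta>A (fo R'A (fo N'A x))) (\<eta>'A x))"
    by (subst Q.\<eta>A_nat[of "\<eta>'A x", simplified, symmetric], rule refl)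
  also have "\<dots> = \<eta>'A x"
    by (subst Q.tA[OF Q.triA2[of "fo F (fo N'A x)", simplified]], simp_all)
  finally show ?thesis .
qed

definition LL where "LL x = Comp T (fa F (fa N'A (fa RA (bb x)))) (aa (fo RA (fo NB x)))"

lemma LL_dom[simp]: "Dom T (LL x) = fo NA (fo RA (fo NB x))"
  and LL_cod[simp]: "Cod T (LL x) = fo F (fo N'A (fo R'A (fo N'B x)))"
  by (simp_all add: LL_def)

lemma L_eta: "Comp A (fa RA (LL x)) (\<eta>A (fo RA (fo NB x))) = Comp A (\<eta>'A (fo R'A (fo N'B x))) (fa RA (bb x))"
proof -
  have "Comp A (fa RA (LL x)) (\<eta>A (fo RA (fo NB x))) = Comp A (fa R'A (fa N'A (fa RA (bb x)))) (Comp A (fa RA (aa (fo RA (fo NB x)))) (\<eta>A (fo RA (fo NB x))))"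
    by (simp add: LL_def Q.fcmp cat_assoc)
  also have "\<dots> = Comp A (fa R'A (fa N'A (fa RA (bb x)))) (\<eta>'A (fo RA (fo NB x)))"
    by (subst eta_a, rule refl)
  also have "\<dots> = Comp A (\<eta>'A (fo R'A (fo N'B x))) (fa RA (bb x))"
    by (subst P.\<eta>A_nat[of "fa RA (bb x)", simplified, symmetric], simp)
  finally show ?thesis .
qed


lemma K: "Comp A (t (fo R'A (fo N'B x))) (Comp A (fa C (fa RA (bb x))) (Comp A (\<xi>i (fo NB x)) (fa RA (fa NB (\<eta>B x)))))
  = Comp A (\<xi>'i (fo N'B x)) (Comp A (fa R'A (fa N'B (\<eta>'B x))) (fa RA (bb x)))"
proof -
  have e1: "Comp A (fa RA (fa NB (fa RB (bb x)))) (fa RA (fa NB (\<eta>B x))) = fa RA (fa NB (\<eta>'B x))"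
  proof -
    have "Comp T (fa NB (fa RB (bb x))) (fa NB (\<eta>B x)) = fa NB (\<eta>'B x)"
      by (rule fun_eqR[OF Q.fNB eta_b]; simp)
    then show ?thesis by (rule fun_eqR[OF Q.fRA]; simp)
  qed
  have e2: "Comp A (fa RA (bb (fo R'B (fo N'B x)))) (fa RA (fa NB (\<eta>'B x))) = Comp A (fa R'A (fa N'B (\<eta>'B x))) (fa RA (bb x))"
    by (rule fun_eq[OF Q.fRA bb_nat[of "\<eta>'B x"], simplified]; simp)
  let ?R = "Comp A (t (fo R'A (fo N'B x))) (Comp A (fa C (fa RA (bb x))) (Comp A (\<xi>i (fo NB x)) (fa RA (fa NB (\<eta>B x)))))"
  have "?R = Comp A (Comp A (\<xi>'i (fo N'B x)) (\<xi>' (fo N'B x))) ?R"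
    by (simp add: P.\<xi>i\<xi>)
  also have "\<dots> = Comp A (\<xi>'i (fo N'B x)) (Comp A (\<xi>' (fo N'B x)) ?R)"
    by (simp add: cat_assoc)
  also have "\<dots> = Comp A (\<xi>'i (fo N'B x)) (Comp A (fa RA (bb (fo R'B (fo N'B x)))) (Comp A (\<xi> (fo F (fo N'B x)))
       (Comp A (fa C (fa RA (bb x))) (Comp A (\<xi>i (fo NB x)) (fa RA (fa NB (\<eta>B x)))))))"
    by (subst Q.tA[OF key[symmetric]], simp_all add: cat_assoc)
  also have "\<dots> = Comp A (\<xi>'i (fo N'B x)) (Comp A (fa RA (bb (fo R'B (fo N'B x)))) (Comp A (fa RA (fa NB (fa RB (bb x))))
       (Comp A (\<xi> (fo NB x)) (Comp A (\<xi>i (fo NB x)) (fa RA (fa NB (\<eta>B x)))))))"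
    by (subst Q.tA[OF Q.\<xi>_nat[of "bb x", simplified]], simp_all add: cat_assoc)
  also have "\<dots> = Comp A (\<xi>'i (fo N'B x)) (Comp A (fa RA (bb (fo R'B (fo N'B x)))) (fa RA (fa NB (\<eta>'B x))))"
    by (subst Q.tA[OF Q.\<xi>\<xi>i], simp_all add: e1)
  also have "\<dots> = Comp A (\<xi>'i (fo N'B x)) (Comp A (fa R'A (fa N'B (\<eta>'B x))) (fa RA (bb x)))"
    by (subst e2, rule refl)
  finally show ?thesis .
qed

lemma main2: "Comp A (fa RA (Comp T (fa F (fa N'B (fa RB (LL x)))) (bb (fo RB (fo NA (fo RA (fo NB x))))))) (Q.tau x)
   = Comp A (P.tau x) (fa RA (bb x))"
proof -
  let ?ys = "fo N'A (fo R'A (fo N'B x))"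
  have e1: "Comp A (fa R'A (fa N'B (fa RB (LL x)))) (fa RA (bb (fo RB (fo NA (fo RA (fo NB x))))))
     = Comp A (fa RA (bb (fo R'B ?ys))) (fa RA (fa NB (fa RB (LL x))))"
    by (rule fun_eq[OF Q.fRA bb_nat[of "fa RB (LL x)", symmetric], simplified]; simp)
  have e4: "Comp A (fa C (fa RA (LL x))) (fa C (\<eta>A (fo RA (fo NB x)))) = Comp A (fa C (\<eta>'A (fo R'A (fo N'B x)))) (fa C (fa RA (bb x)))"
    by (rule fun_eq[OF Q.fC L_eta]; simp)
  have "Comp A (fa RA (Comp T (fa F (fa N'B (fa RB (LL x)))) (bb (fo RB (fo NA (fo RA (fo NB x))))))) (Q.tau x)
     = Comp A (fa R'A (fa N'B (fa RB (LL x)))) (Comp A (fa RA (bb (fo RB (fo NA (fo RA (fo NB x))))))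
         (Comp A (\<xi> (fo NA (fo RA (fo NB x)))) (Comp A (fa C (\<eta>A (fo RA (fo NB x)))) (Comp A (\<xi>i (fo NB x)) (fa RA (fa NB (\<eta>B x)))))))"
    by (simp add: Q.fcmp mk_tau_def cat_assoc)
  also have "\<dots> = Comp A (fa RA (bb (fo R'B ?ys))) (Comp A (fa RA (fa NB (fa RB (LL x))))
         (Comp A (\<xi> (fo NA (fo RA (fo NB x)))) (Comp A (fa C (\<eta>A (fo RA (fo NB x)))) (Comp A (\<xi>i (fo NB x)) (fa RA (fa NB (\<eta>B x)))))))"
    by (subst Q.tA[OF e1], simp_all add: cat_assoc)
  also have "\<dots> = Comp A (fa RA (bb (fo R'B ?ys))) (Comp A (\<xi> (fo F ?ys)) (Comp A (fa C (fa RA (LL x)))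
         (Comp A (fa C (\<eta>A (fo RA (fo NB x)))) (Comp A (\<xi>i (fo NB x)) (fa RA (fa NB (\<eta>B x)))))))"
    by (subst Q.tA[OF Q.\<xi>_nat[of "LL x", simplified, symmetric]], simp_all add: cat_assoc)
  also have "\<dots> = Comp A (\<xi>' ?ys) (Comp A (t (fo R'A ?ys)) (Comp A (fa C (fa RA (LL x)))
         (Comp A (fa C (\<eta>A (fo RA (fo NB x)))) (Comp A (\<xi>i (fo NB x)) (fa RA (fa NB (\<eta>B x)))))))"
    by (subst Q.tA[OF key], simp_all add: cat_assoc)
  also have "\<dots> = Comp A (\<xi>' ?ys) (Comp A (t (fo R'A ?ys)) (Comp A (fa C (\<eta>'A (fo R'A (fo N'B x))))
         (Comp A (fa C (fa RA (bb x))) (Comp A (\<xi>i (fo NB x)) (fa RA (fa NB (\<eta>B x)))))))"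
    by (subst Q.tA[OF e4], simp_all add: cat_assoc)
  also have "\<dots> = Comp A (\<xi>' ?ys) (Comp A (fa C' (\<eta>'A (fo R'A (fo N'B x)))) (Comp A (t (fo R'A (fo N'B x)))
         (Comp A (fa C (fa RA (bb x))) (Comp A (\<xi>i (fo NB x)) (fa RA (fa NB (\<eta>B x)))))))"
    by (subst Q.tA[OF t_nat[of "\<eta>'A (fo R'A (fo N'B x))", simplified]], simp_all add: cat_assoc)
  also have "\<dots> = Comp A (\<xi>' ?ys) (Comp A (fa C' (\<eta>'A (fo R'A (fo N'B x))))
         (Comp A (\<xi>'i (fo N'B x)) (Comp A (fa R'A (fa N'B (\<eta>'B x))) (fa RA (bb x)))))"
    by (subst K, rule refl)
  finally show ?thesis by (simp add: mk_tau_def cat_assoc)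
qed


lemma part2: "pretorsor_mor A B T T' NA RA \<epsilon>A NB RB \<epsilon>B Q.tau N'A R'A \<eta>'A N'B R'B \<eta>'B P.tau F"
  unfolding pretorsor_mor_def Let_def using fF RAF RBF main2[unfolded LL_def] by blast

end

theorem mainTheorem7:
  fixes A :: "('a,'am) cat" and B :: "('b,'bm) cat" and T :: "('t,'tm) cat"
    and NA :: "('a,'am,'t,'tm) ftr" and RA :: "('t,'tm,'a,'am) ftr"
    and \<eta>A :: "'a \<Rightarrow> 'am" and \<epsilon>A :: "'t \<Rightarrow> 'tm"
    and NB :: "('b,'bm,'t,'tm) ftr" and RB :: "('t,'tm,'b,'bm) ftr"
    and \<eta>B :: "'b \<Rightarrow> 'bm" and \<epsilon>B :: "'t \<Rightarrow> 'tm"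
    and C :: "('a,'am,'a,'am) ftr" and \<Delta> :: "'a \<Rightarrow> 'am" and \<epsilon> :: "'a \<Rightarrow> 'am"
    and \<xi> :: "'t \<Rightarrow> 'am" and \<xi>i :: "'t \<Rightarrow> 'am"
  assumes obj: "rarr_obj A B T NA RA \<eta>A \<epsilon>A NB RB \<eta>B \<epsilon>B C \<Delta> \<epsilon> \<xi>"
    and inv: "inverse_nt A \<xi> \<xi>i"
  shows "pre_torsor A B T NA RA \<eta>A \<epsilon>A NB RB \<eta>B \<epsilon>B (mk_tau A C NA RA \<eta>A NB \<eta>B \<xi> \<xi>i) \<and>
    (\<forall>(T' :: ('s,'sm) cat) N'A R'A \<eta>'A \<epsilon>'A N'B R'B \<eta>'B \<epsilon>'B C' \<Delta>' \<epsilon>' \<xi>' \<xi>'i F t.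
       rarr_obj A B T' N'A R'A \<eta>'A \<epsilon>'A N'B R'B \<eta>'B \<epsilon>'B C' \<Delta>' \<epsilon>' \<xi>' \<longrightarrow>
       inverse_nt A \<xi>' \<xi>'i \<longrightarrow>
       rarr_mor A B T T' RA NB RB \<epsilon>B C \<Delta> \<epsilon> \<xi> R'A N'B R'B \<eta>'B C' \<Delta>' \<epsilon>' \<xi>' F t \<longrightarrow>
       pretorsor_mor A B T T' NA RA \<epsilon>A NB RB \<epsilon>B (mk_tau A C NA RA \<eta>A NB \<eta>B \<xi> \<xi>i)
         N'A R'A \<eta>'A N'B R'B \<eta>'B (mk_tau A C' N'A R'A \<eta>'A N'B \<eta>'B \<xi>' \<xi>'i) F)"
proof (intro conjI allI impI)
  interpret Q: rarr A B T NA RA \<eta>A \<epsilon>A NB RB \<eta>B \<epsilon>B C \<Delta> \<epsilon> \<xi> \<xi>i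
    by (rule rarr.intro[OF obj inv])
  show "pre_torsor A B T NA RA \<eta>A \<epsilon>A NB RB \<eta>B \<epsilon>B (mk_tau A C NA RA \<eta>A NB \<eta>B \<xi> \<xi>i)"
    by (rule Q.part1)
next
  fix T' :: "('s,'sm) cat" and N'A R'A \<eta>'A \<epsilon>'A N'B R'B \<eta>'B \<epsilon>'B C' \<Delta>' \<epsilon>' \<xi>' \<xi>'i F t
  assume o': "rarr_obj A B T' N'A R'A \<eta>'A \<epsilon>'A N'B R'B \<eta>'B \<epsilon>'B C' \<Delta>' \<epsilon>' \<xi>'"
    and i': "inverse_nt A \<xi>' \<xi>'i"
    and m: "rarr_mor A B T T' RA NB RB \<epsilon>B C \<Delta> \<epsilon> \<xi> R'A N'B R'B \<eta>'B C' \<Delta>' \<epsilon>' \<xi>' F t"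
  have "rarr2 A B T NA RA \<eta>A \<epsilon>A NB RB \<eta>B \<epsilon>B C \<Delta> \<epsilon> \<xi> \<xi>i T' N'A R'A \<eta>'A \<epsilon>'A N'B R'B \<eta>'B \<epsilon>'B C' \<Delta>' \<epsilon>' \<xi>' \<xi>'i F t"
    by (intro rarr2.intro rarr.intro rarr2_axioms.intro obj inv o' i' m)
  then show "pretorsor_mor A B T T' NA RA \<epsilon>A NB RB \<epsilon>B (mk_tau A C NA RA \<eta>A NB \<eta>B \<xi> \<xi>i)
         N'A R'A \<eta>'A N'B R'B \<eta>'B (mk_tau A C' N'A R'A \<eta>'A N'B \<eta>'B \<xi>' \<xi>'i) F"
    by (rule rarr2.part2)
qed

end
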